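(* Define the relation $\succeq^6$ on $\mathcal{A}$ by $\mathbf{A}\succeq^6\mathbf{B}\iff\mu(\mathbf{A})^n\le\mu(\mathbf{B})^m$, where $n$ is the size of $\mathbf{A}$, $m$ is the size of $\mathbf{B}$, and for $\mathbf{A}=[a_{ij}]$ of size $n$, $\mu(\mathbf{A})=\max_{1\le i<j<k\le n}\max\{a_{ij}a_{jk}/a_{ik},\ a_{ik}/(a_{ij}a_{jk})\}$. Then $\succeq^6$ is an inconsistency ranking that satisfies PR, IIP, HTE, SI and MON, but does not satisfy RED.
   Context: A pairwise comparison matrix of size $n$ is a matrix $\mathbf{A}=[a_{ij}]\in\mathbb{R}^{n\times n}$ with all entries positive and $a_{ji}=1/a_{ij}$ for all $i,j$. Let $\mathcal{A}$ denote the set of all pairwise comparison matrices of all sizes $n\ge 3$. For $\mathbf{A}\in\mathcal{A}$ of size $n$ and $3\le m\le n$, a submatrix of $\mathbf{A}$ is a matrix $\mathbf{B}=[b_{ij}]$ of size $m$ with $b_{ij}=a_{\sigma(i)\sigma(j)}$ for some strictly increasing map $\sigma:\{1,\dots,m\}\to\{1,\dots,n\}$. A triad is a pairwise comparison matrix of size $3$; a triad of $\mathbf{A}$ is a submatrix of $\mathbf{A}$ of size $3$ (when $n=3$, $\mathbf{A}$ is its own unique triad). A triad $\mathbf{T}$ is written $\mathbf{T}=(t_1;t_2;t_3)$, meaning $t_{12}=t_1$, $t_{13}=t_2$, $t_{23}=t_3$ (the remaining entries are determined by reciprocity); $\mathbf{T}^\top$ denotes its transpose, i.e. the triad $(1/t_1;1/t_2;1/t_3)$.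 An inconsistency ranking is a complete and transitive binary relation $\succeq$ on $\mathcal{A}$; $\mathbf{A}\sim\mathbf{B}$ means $\mathbf{A}\succeq\mathbf{B}$ and $\mathbf{B}\succeq\mathbf{A}$; $\mathbf{A}\preceq\mathbf{B}$ means $\mathbf{B}\succeq\mathbf{A}$. Properties of an inconsistency ranking $\succeq$: (PR) for all $s_2,t_2\ge 1$: $(1;s_2;1)\succeq(1;t_2;1)\iff s_2\le t_2$. (IIP) $\mathbf{T}\sim\mathbf{T}^\top$ for every triad $\mathbf{T}$. (HTE) $(1;t_2;t_3)\sim(1;t_2/t_3;1)$ for all $t_2,t_3>0$. (SI) $(t_1;t_2;t_3)\sim(kt_1;k^2t_2;kt_3)$ for all $t_1,t_2,t_3>0$ and all $k>0$. (MON) $\mathbf{A}\preceq\mathbf{T}$ for every $\mathbf{A}\in\mathcal{A}$ and every triad $\mathbf{T}$ of $\mathbf{A}$. (RED) every $\mathbf{A}\in\mathcal{A}$ has a triad $\mathbf{T}$ with $\mathbf{A}\sim\mathbf{T}$. *)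

theory Defs
  imports Complex_Main
begin

text \<open>A matrix of size n is represented as a pair (n, a) with a :: nat => nat => real;
  indices range over 0..n-1 and entries outside this range are normalised to 1,
  so that every pairwise comparison matrix has a unique representative.\<close>

type_synonym mat = "nat \<times> (nat \<Rightarrow> nat \<Rightarrow> real)"

definition msize :: "mat \<Rightarrow> nat" where "msize A = fst A"
definition ent :: "mat \<Rightarrow> nat \<Rightarrow> nat \<Rightarrow> real" where "ent A = snd A"

definition is_pcm :: "mat \<Rightarrow> bool" where
  "is_pcm A \<longleftrightarrow>
     (\<forall>i<msize A. \<forall>j<msize A. ent A i j > 0 \<and> ent A j i = 1 / ent A i j) \<and>
     (\<forall>i j. (msize A \<le> i \<or> msize A \<le> j) \<longrightarrow> ent A i j = 1)"

definition PCMs :: "mat set" where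
  "PCMs = {A. 3 \<le> msize A \<and> is_pcm A}"

definition submatrix :: "mat \<Rightarrow> mat \<Rightarrow> bool" where
  "submatrix B A \<longleftrightarrow> A \<in> PCMs \<and> B \<in> PCMs \<and> msize B \<le> msize A \<and>
     (\<exists>\<sigma>. strict_mono_on {0..<msize B} \<sigma> \<and> (\<forall>i<msize B. \<sigma> i < msize A) \<and>
          (\<forall>i<msize B. \<forall>j<msize B. ent B i j = ent A (\<sigma> i) (\<sigma> j)))"

definition triad_of :: "mat \<Rightarrow> mat \<Rightarrow> bool" where
  "triad_of T A \<longleftrightarrow> submatrix T A \<and> msize T = 3"

text \<open>The triad (t1;t2;t3): t12 = t1, t13 = t2, t23 = t3 (0-based indices).\<close>
definition triad :: "real \<Rightarrow> real \<Rightarrow> real \<Rightarrow> mat" where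
  "triad t1 t2 t3 = (3, \<lambda>i j.
     if i = 0 \<and> j = 1 then t1 else if i = 1 \<and> j = 0 then 1 / t1
     else if i = 0 \<and> j = 2 then t2 else if i = 2 \<and> j = 0 then 1 / t2
     else if i = 1 \<and> j = 2 then t3 else if i = 2 \<and> j = 1 then 1 / t3
     else 1)"

definition mtranspose :: "mat \<Rightarrow> mat" where
  "mtranspose A = (msize A, \<lambda>i j. ent A j i)"

definition mu :: "mat \<Rightarrow> real" where
  "mu A = Max {max (ent A i j * ent A j k / ent A i k) (ent A i k / (ent A i j * ent A j k)) |
                 i j k. i < j \<and> j < k \<and> k < msize A}"

definition rel6 :: "mat \<Rightarrow> mat \<Rightarrow> bool" where
  "rel6 A B \<longleftrightarrow> mu A ^ msize A \<le> mu B ^ msize B"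

definition indiff :: "(mat \<Rightarrow> mat \<Rightarrow> bool) \<Rightarrow> mat \<Rightarrow> mat \<Rightarrow> bool" where
  "indiff R A B \<longleftrightarrow> R A B \<and> R B A"

definition inconsistency_ranking :: "(mat \<Rightarrow> mat \<Rightarrow> bool) \<Rightarrow> bool" where
  "inconsistency_ranking R \<longleftrightarrow>
     (\<forall>A\<in>PCMs. \<forall>B\<in>PCMs. R A B \<or> R B A) \<and>
     (\<forall>A\<in>PCMs. \<forall>B\<in>PCMs. \<forall>C\<in>PCMs. R A B \<longrightarrow> R B C \<longrightarrow> R A C)"

definition PR :: "(mat \<Rightarrow> mat \<Rightarrow> bool) \<Rightarrow> bool" where
  "PR R \<longleftrightarrow> (\<forall>s2 t2::real. s2 \<ge> 1 \<longrightarrow> t2 \<ge> 1 \<longrightarrow>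
     (R (triad 1 s2 1) (triad 1 t2 1) \<longleftrightarrow> s2 \<le> t2))"

definition IIP :: "(mat \<Rightarrow> mat \<Rightarrow> bool) \<Rightarrow> bool" where
  "IIP R \<longleftrightarrow> (\<forall>T\<in>PCMs. msize T = 3 \<longrightarrow> indiff R T (mtranspose T))"

definition HTE :: "(mat \<Rightarrow> mat \<Rightarrow> bool) \<Rightarrow> bool" where
  "HTE R \<longleftrightarrow> (\<forall>t2 t3::real. t2 > 0 \<longrightarrow> t3 > 0 \<longrightarrow>
     indiff R (triad 1 t2 t3) (triad 1 (t2 / t3) 1))"

definition SI :: "(mat \<Rightarrow> mat \<Rightarrow> bool) \<Rightarrow> bool" where
  "SI R \<longleftrightarrow> (\<forall>t1 t2 t3 k::real. t1 > 0 \<longrightarrow> t2 > 0 \<longrightarrow> t3 > 0 \<longrightarrow> k > 0 \<longrightarrow>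
     indiff R (triad t1 t2 t3) (triad (k * t1) (k^2 * t2) (k * t3)))"

definition MON :: "(mat \<Rightarrow> mat \<Rightarrow> bool) \<Rightarrow> bool" where
  "MON R \<longleftrightarrow> (\<forall>A\<in>PCMs. \<forall>T. triad_of T A \<longrightarrow> R T A)"

definition RED :: "(mat \<Rightarrow> mat \<Rightarrow> bool) \<Rightarrow> bool" where
  "RED R \<longleftrightarrow> (\<forall>A\<in>PCMs. \<exists>T. triad_of T A \<and> indiff R A T)"

end

theory Submission
  imports Defs
begin

definition g :: "(nat \<Rightarrow> nat \<Rightarrow> real) \<Rightarrow> nat \<Rightarrow> nat \<Rightarrow> nat \<Rightarrow> real" where
  "g a i j k = max (a i j * a j k / a i k) (a i k / (a i j * a j k))"

lemma mu_g: "mu A = Max {g (ent A) i j k | i j k. i < j \<and> j < k \<and> k < msize A}"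
  unfolding mu_def g_def by simp

lemma fin: "finite {g a i j k | i j k. i < j \<and> j < k \<and> k < (n::nat)}"
proof -
  have "{g a i j k | i j k. i < j \<and> j < k \<and> k < n} \<subseteq>
        (\<lambda>(i,j,k). g a i j k) ` ({..<n} \<times> {..<n} \<times> {..<n})"
  proof
    fix x assume "x \<in> {g a i j k | i j k. i < j \<and> j < k \<and> k < n}"
    then obtain i j k where "x = g a i j k" "i < j" "j < k" "k < n" by blast
    thus "x \<in> (\<lambda>(i,j,k). g a i j k) ` ({..<n} \<times> {..<n} \<times> {..<n})"
      by (intro image_eqI[where x="(i,j,k)"]) auto
  qed
  thus ?thesis by (rule finite_subset) auto
qed

lemma mu_ge: "i < j \<Longrightarrow> j < k \<Longrightarrow> k < msize A \<Longrightarrow> g (ent A) i j k \<le> mu A"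
  unfolding mu_g by (rule Max_ge[OF fin]) blast

lemma mu_attained: "3 \<le> msize A \<Longrightarrow> \<exists>i j k. i < j \<and> j < k \<and> k < msize A \<and> mu A = g (ent A) i j k"
proof -
  assume "3 \<le> msize A"
  hence ne: "{g (ent A) i j k | i j k. i < j \<and> j < k \<and> k < msize A} \<noteq> {}"
  proof -
    have "g (ent A) 0 1 2 \<in> {g (ent A) i j k | i j k. i < j \<and> j < k \<and> k < msize A}"
      using \<open>3 \<le> msize A\<close> by (intro CollectI exI[of _ "0::nat"] exI[of _ "1::nat"] exI[of _ "2::nat"]) auto
    thus ?thesis by blast
  qed
  from Max_in[OF fin ne] show ?thesis unfolding mu_g by blast
qed

lemma g_ge1: "a i j > 0 \<Longrightarrow> a j k > 0 \<Longrightarrow> a i k > 0 \<Longrightarrow> g a i j k \<ge> 1"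
proof -
  assume h: "a i j > 0" "a j k > 0" "a i k > 0"
  define x where "x = a i j * a j k / a i k"
  have xp: "x > 0" using h unfolding x_def by simp
  have "a i k / (a i j * a j k) = 1 / x" unfolding x_def by simp
  hence "g a i j k = max x (1/x)" unfolding g_def x_def by simp
  moreover have "max x (1/x) \<ge> 1"
  proof (cases "x \<ge> 1")
    case False
    hence "1/x \<ge> 1" using xp by (simp add: field_simps)
    thus ?thesis by simp
  qed simp
  ultimately show ?thesis by simp
qed

lemma mu3: "msize A = 3 \<Longrightarrow> mu A = g (ent A) 0 1 2"
proof -
  assume "msize A = 3"
  hence "{g (ent A) i j k | i j k. i < j \<and> j < k \<and> k < msize A} = {g (ent A) 0 1 2}"
  proof (intro equalityI subsetI)
    fix x assume "x \<in> {g (ent A) i j k | i j k. i < j \<and> j < k \<and> k < msize A}"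
    then obtain i j k where "i < j" "j < k" "k < 3" "x = g (ent A) i j k"
      using \<open>msize A = 3\<close> by auto
    moreover hence "i = 0 \<and> j = 1 \<and> k = 2" by linarith
    ultimately show "x \<in> {g (ent A) 0 1 2}" by simp
  next
    fix x assume "x \<in> {g (ent A) 0 1 2}"
    thus "x \<in> {g (ent A) i j k | i j k. i < j \<and> j < k \<and> k < msize A}"
      using \<open>msize A = 3\<close> by force
  qed
  thus ?thesis unfolding mu_g by simp
qed

lemma pcm_pos: "A \<in> PCMs \<Longrightarrow> i < msize A \<Longrightarrow> j < msize A \<Longrightarrow> ent A i j > 0"
  unfolding PCMs_def is_pcm_def by blast

lemma pcm_rec: "A \<in> PCMs \<Longrightarrow> i < msize A \<Longrightarrow> j < msize A \<Longrightarrow> ent A j i = 1 / ent A i j"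
  unfolding PCMs_def is_pcm_def by blast

lemma mu_ge1: "A \<in> PCMs \<Longrightarrow> mu A \<ge> 1"
proof -
  assume A: "A \<in> PCMs"
  then obtain i j k where "i < j" "j < k" "k < msize A" "mu A = g (ent A) i j k"
    using mu_attained unfolding PCMs_def by blast
  moreover have "g (ent A) i j k \<ge> 1"
    using \<open>i < j\<close> \<open>j < k\<close> \<open>k < msize A\<close>
    by (intro g_ge1 pcm_pos[OF A]) auto
  ultimately show ?thesis by simp
qed

lemma triad_sz: "msize (triad a b c) = 3" unfolding triad_def msize_def by simp

lemma mu_triad: "mu (triad a b c) = max (a * c / b) (b / (a * c))"
  unfolding mu3[OF triad_sz] by (simp add: g_def ent_def triad_def)

lemma mu_triad1: "x \<ge> 1 \<Longrightarrow> mu (triad 1 x 1) = x"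
proof -
  assume x: "x \<ge> 1"
  have "1 / x \<le> 1" using x by simp
  also have "1 \<le> x" by fact
  finally have "1 / x \<le> x" .
  thus ?thesis by (simp add: mu_triad max_def)
qed

lemma mon: "triad_of T A \<Longrightarrow> mu T \<le> mu A"
proof -
  assume "triad_of T A"
  then obtain \<sigma> where T3: "msize T = 3" and sm: "strict_mono_on {0..<3} \<sigma>"
    and lt: "\<forall>i<3. \<sigma> i < msize A" and e: "\<forall>i<3. \<forall>j<3. ent T i j = ent A (\<sigma> i) (\<sigma> j)"
    unfolding triad_of_def submatrix_def by auto
  have "\<sigma> 0 < \<sigma> 1" "\<sigma> 1 < \<sigma> 2" using sm by (auto simp: strict_mono_on_def)
  moreover have "\<sigma> 2 < msize A" using lt by simp
  ultimately have "g (ent A) (\<sigma> 0) (\<sigma> 1) (\<sigma> 2) \<le> mu A" by (rule mu_ge)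
  moreover have "mu T = g (ent A) (\<sigma> 0) (\<sigma> 1) (\<sigma> 2)"
    using e by (simp add: mu3[OF T3] g_def)
  ultimately show ?thesis by simp
qed

lemma mon2: "A \<in> PCMs \<Longrightarrow> triad_of T A \<Longrightarrow> mu T ^ 3 \<le> mu A ^ 3 \<and> mu A ^ 3 \<le> mu A ^ msize A"
proof -
  assume A: "A \<in> PCMs" and t: "triad_of T A"
  have T: "T \<in> PCMs" using t unfolding triad_of_def submatrix_def by auto
  have "mu T \<ge> 1" using mu_ge1[OF T] .
  hence "mu T ^ 3 \<le> mu A ^ 3" using mon[OF t] by (intro power_mono) auto
  moreover have "mu A ^ 3 \<le> mu A ^ msize A"
    using mu_ge1[OF A] A unfolding PCMs_def by (intro power_increasing) auto
  ultimately show ?thesis by simp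
qed

definition A0 :: mat where
  "A0 = (4, \<lambda>i j. if i = 0 \<and> j = 1 then 2 else if i = 1 \<and> j = 0 then 1/2 else 1)"

lemma A0_pcm: "A0 \<in> PCMs"
  unfolding PCMs_def is_pcm_def A0_def msize_def ent_def by auto

lemma A0_mu: "mu A0 \<ge> 2"
proof -
  have "g (ent A0) 0 1 2 \<le> mu A0" by (rule mu_ge) (auto simp: A0_def msize_def)
  moreover have "g (ent A0) 0 1 2 = 2" by (simp add: g_def A0_def ent_def)
  ultimately show ?thesis by simp
qed

theorem mainTheorem7:
  shows "inconsistency_ranking rel6 \<and> PR rel6 \<and> IIP rel6 \<and> HTE rel6 \<and> SI rel6 \<and>
         MON rel6 \<and> \<not> RED rel6"
proof (intro conjI)
  show "inconsistency_ranking rel6"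
    unfolding inconsistency_ranking_def rel6_def by auto
  show "PR rel6"
    unfolding PR_def rel6_def
  proof (intro allI impI)
    fix s t :: real assume "s \<ge> 1" "t \<ge> 1"
    moreover have "mu (triad 1 s 1) = s" using \<open>s \<ge> 1\<close> by (rule mu_triad1)
    moreover have "mu (triad 1 t 1) = t" using \<open>t \<ge> 1\<close> by (rule mu_triad1)
    moreover have "s ^ 3 \<le> t ^ 3 \<longleftrightarrow> s \<le> t"
      using \<open>s \<ge> 1\<close> \<open>t \<ge> 1\<close> by (intro power_mono_iff) auto
    ultimately show "(mu (triad 1 s 1) ^ msize (triad 1 s 1) \<le> mu (triad 1 t 1) ^ msize (triad 1 t 1)) = (s \<le> t)"
      by (simp only: triad_sz)
  qed
  show "IIP rel6"
    unfolding IIP_def indiff_def rel6_def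
  proof (intro ballI impI)
    fix T assume T: "T \<in> PCMs" and T3: "msize T = 3"
    have M3: "msize (mtranspose T) = 3" using T3 by (simp add: mtranspose_def msize_def)
    have p: "ent T 0 1 > 0" "ent T 1 2 > 0" "ent T 0 2 > 0"
      by (rule pcm_pos[OF T]; simp add: T3)+
    have r: "ent T 1 0 = 1 / ent T 0 1" "ent T 2 1 = 1 / ent T 1 2" "ent T 2 0 = 1 / ent T 0 2"
      by (rule pcm_rec[OF T]; simp add: T3)+
    have et: "\<And>i j. ent (mtranspose T) i j = ent T j i" by (simp add: mtranspose_def ent_def)
    define a where "a = ent T 0 1"
    define b where "b = ent T 1 2"
    define c where "c = ent T 0 2"
    have ap: "a > 0" "b > 0" "c > 0" using p by (auto simp: a_def b_def c_def)
    have e1: "(1/a) * (1/b) / (1/c) = c / (a * b)" using ap by (simp add: field_simps)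
    have e2: "(1/c) / ((1/a) * (1/b)) = a * b / c" using ap by (simp add: field_simps)
    have "mu (mtranspose T) = max ((1/a) * (1/b) / (1/c)) ((1/c) / ((1/a) * (1/b)))"
      unfolding mu3[OF M3] g_def et using r by (simp add: a_def b_def c_def)
    also have "\<dots> = max (a * b / c) (c / (a * b))" by (simp only: e1 e2 max.commute)
    also have "\<dots> = mu T" unfolding mu3[OF T3] g_def by (simp add: a_def b_def c_def)
    finally have "mu (mtranspose T) = mu T" .
    thus "mu T ^ msize T \<le> mu (mtranspose T) ^ msize (mtranspose T) \<and>
          mu (mtranspose T) ^ msize (mtranspose T) \<le> mu T ^ msize T" using M3 T3 by simp
  qed
  show "HTE rel6"
    unfolding HTE_def indiff_def rel6_def
    by (auto simp: triad_sz mu_triad max.commute)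
  show "SI rel6"
    unfolding SI_def indiff_def rel6_def
  proof (intro allI impI)
    fix t1 t2 t3 k :: real assume "t1 > 0" "t2 > 0" "t3 > 0" "k > 0"
    hence "mu (triad (k * t1) (k^2 * t2) (k * t3)) = mu (triad t1 t2 t3)"
      by (simp add: mu_triad power2_eq_square)
    moreover have "msize (triad (k * t1) (k^2 * t2) (k * t3)) = msize (triad t1 t2 t3)" by (simp only: triad_sz)
    ultimately show "mu (triad t1 t2 t3) ^ msize (triad t1 t2 t3) \<le> mu (triad (k * t1) (k\<^sup>2 * t2) (k * t3)) ^ msize (triad (k * t1) (k\<^sup>2 * t2) (k * t3)) \<and>
        mu (triad (k * t1) (k\<^sup>2 * t2) (k * t3)) ^ msize (triad (k * t1) (k\<^sup>2 * t2) (k * t3)) \<le> mu (triad t1 t2 t3) ^ msize (triad t1 t2 t3)"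
      by simp
  qed
  show "MON rel6"
    unfolding MON_def rel6_def
  proof (intro ballI allI impI)
    fix A T assume "A \<in> PCMs" "triad_of T A"
    moreover have "msize T = 3" using \<open>triad_of T A\<close> unfolding triad_of_def by simp
    ultimately show "mu T ^ msize T \<le> mu A ^ msize A" using mon2 by fastforce
  qed
  show "\<not> RED rel6"
  proof
    assume "RED rel6"
    then obtain T where t: "triad_of T A0" and i: "rel6 A0 T"
      using A0_pcm unfolding RED_def indiff_def by blast
    have T3: "msize T = 3" using t unfolding triad_of_def by simp
    have "mu A0 ^ 4 \<le> mu T ^ 3" using i T3 unfolding rel6_def by (simp add: A0_def msize_def)
    also have "\<dots> \<le> mu A0 ^ 3" using mon2[OF A0_pcm t] by simp
    finally have "mu A0 ^ 4 \<le> mu A0 ^ 3" .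
    moreover have "mu A0 ^ 3 < mu A0 ^ 4" using A0_mu by (intro power_strict_increasing) auto
    ultimately show False by simp
  qed
qed

end
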